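(* Let $n\ge2$, let $G$ be an absolutely continuous distribution function on $[0,\infty)$, and $\alpha_1,\dots,\alpha_n,\alpha^*_1,\dots,\alpha^*_n>0$. Let $\phi_1,\phi_2$ be Archimedean generators with pseudo-inverses $\psi_1,\psi_2$. Let $\boldsymbol{X}=(X_1,\dots,X_n)$ have joint distribution function $\phi_1\big(\sum_{i=1}^n\psi_1([G(x_i)]^{\alpha_i})\big)$ and $\boldsymbol{X}^*$ have joint distribution function $\phi_2\big(\sum_{i=1}^n\psi_2([G(x_i)]^{\alpha^*_i})\big)$ (proportional reversed hazard marginals with Archimedean copulas). If $\phi_1$ or $\phi_2$ is log-convex, $\psi_2\circ\phi_1$ is super-additive, and $\prod_{i=1}^{j}\alpha^*_{[i]}\le\prod_{i=1}^{j}\alpha_{[i]}$ for all $j=1,\dots,n$, then $X_{n:n}\ge_{\rm st}X^*_{n:n}$.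
   Context: An Archimedean generator is an $n$-monotone function $\phi:[0,\infty)\to[0,1]$ with $\phi(0)=1$, $\lim_{x\to\infty}\phi(x)=0$ ($n$-monotone: $(-1)^k\phi^{(k)}\ge0$ for $k=0,\dots,n-2$ and $(-1)^{n-2}\phi^{(n-2)}$ decreasing and convex); $\psi=\phi^{-1}$ is its pseudo-inverse. $h$ super-additive means $h(x+y)\ge h(x)+h(y)$ for $x,y\ge0$. $\alpha_{[1]}\ge\dots\ge\alpha_{[n]}$ are the components in decreasing order. $X_{n:n}=\max_i X_i$. $X\le_{\rm st}Y$ means $P(X>x)\le P(Y>x)$ for all $x$. *)

theory Defs
  imports "HOL-Probability.Probability"
begin

definition n_monotone_pos :: "nat \<Rightarrow> (real \<Rightarrow> real) \<Rightarrow> bool" where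
  "n_monotone_pos n f \<longleftrightarrow>
     (\<forall>k < n - 2. \<forall>x > 0. ((deriv ^^ k) f) differentiable (at x)) \<and>
     (\<forall>k \<le> n - 2. \<forall>x > 0. (-1) ^ k * (deriv ^^ k) f x \<ge> 0) \<and>
     antimono_on {0<..} (\<lambda>x. (-1) ^ (n - 2) * (deriv ^^ (n - 2)) f x) \<and>
     convex_on {0<..} (\<lambda>x. (-1) ^ (n - 2) * (deriv ^^ (n - 2)) f x)"

definition archimedean_generator :: "nat \<Rightarrow> (real \<Rightarrow> real) \<Rightarrow> bool" where
  "archimedean_generator n \<phi> \<longleftrightarrow>
     continuous_on {0..} \<phi> \<and> n_monotone_pos n \<phi> \<and>
     (\<forall>x \<ge> 0. 0 \<le> \<phi> x \<and> \<phi> x \<le> 1) \<and> \<phi> 0 = 1 \<and> (\<phi> \<longlongrightarrow> 0) at_top"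

text \<open>Pseudo-inverse psi(t) = inf{u \<ge> 0. phi u \<le> t}, valued in the extended reals
  (psi 0 = \<infinity> for strict generators).\<close>
definition pseudo_inv :: "(real \<Rightarrow> real) \<Rightarrow> real \<Rightarrow> ereal" where
  "pseudo_inv \<phi> t = Inf (ereal ` {u. 0 \<le> u \<and> \<phi> u \<le> t})"

definition gen_eval :: "(real \<Rightarrow> real) \<Rightarrow> ereal \<Rightarrow> real" where
  "gen_eval \<phi> z = (if z = \<infinity> then 0 else \<phi> (real_of_ereal z))"

definition log_convex :: "(real \<Rightarrow> real) \<Rightarrow> bool" where
  "log_convex \<phi> \<longleftrightarrow> (\<forall>x \<ge> 0. \<phi> x > 0) \<and> convex_on {0..} (\<lambda>x. ln (\<phi> x))"

definition super_additive :: "(real \<Rightarrow> ereal) \<Rightarrow> bool" where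
  "super_additive h \<longleftrightarrow> (\<forall>x \<ge> 0. \<forall>y \<ge> 0. h x + h y \<le> h (x + y))"

definition abs_cont_cdf_nonneg :: "(real \<Rightarrow> real) \<Rightarrow> bool" where
  "abs_cont_cdf_nonneg G \<longleftrightarrow>
     (\<exists>g. (\<forall>x. 0 \<le> g x) \<and> (g has_integral 1) UNIV \<and> (\<forall>x. (g has_integral G x) {..x})) \<and>
     (\<forall>x < 0. G x = 0)"

definition dec_arr :: "nat \<Rightarrow> (nat \<Rightarrow> real) \<Rightarrow> real list" where
  "dec_arr n \<alpha> = rev (sort (map \<alpha> [0..<n]))"

end

theory Submission
  imports Defs
begin


lemma abel_nonneg:
  fixes c d :: "nat \<Rightarrow> real"
  assumes mono: "\<And>i. Suc i < n \<Longrightarrow> c (Suc i) \<le> c i"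
    and nn: "\<And>i. i < n \<Longrightarrow> 0 \<le> c i"
    and ps: "\<And>m. m \<le> n \<Longrightarrow> 0 \<le> (\<Sum>i<m. d i)"
  shows "0 \<le> (\<Sum>i<n. c i * d i)"
proof -
  have claim: "m < n \<Longrightarrow> c m * (\<Sum>i<m. d i) \<le> (\<Sum>i<m. c i * d i)" for m
  proof (induction m)
    case 0 then show ?case by simp
  next
    case (Suc m)
    have "c (Suc m) * (\<Sum>i<Suc m. d i) \<le> c m * (\<Sum>i<Suc m. d i)"
      using mono[of m] ps[of "Suc m"] Suc.prems by (intro mult_right_mono) auto
    also have "\<dots> = c m * (\<Sum>i<m. d i) + c m * d m" by (simp add: algebra_simps)
    also have "\<dots> \<le> (\<Sum>i<m. c i * d i) + c m * d m" using Suc by simp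
    finally show ?case by simp
  qed
  show ?thesis
  proof (cases n)
    case 0 then show ?thesis by simp
  next
    case (Suc k)
    have "0 \<le> c k * (\<Sum>i<Suc k. d i)" using nn[of k] ps[of "Suc k"] Suc by simp
    also have "\<dots> = c k * (\<Sum>i<k. d i) + c k * d k" by (simp add: algebra_simps)
    also have "\<dots> \<le> (\<Sum>i<k. c i * d i) + c k * d k" using claim[of k] Suc by simp
    finally show ?thesis using Suc by simp
  qed
qed

definition subg :: "(real \<Rightarrow> real) \<Rightarrow> real \<Rightarrow> real" where
  "subg F y = Inf ((\<lambda>t. (F t - F y) / (t - y)) ` {y<..})"

lemma slope_chain:
  fixes F :: "real \<Rightarrow> real"
  assumes cvx: "convex_on UNIV F" and "x < y" "y < t"
  shows "(F y - F x) / (y - x) \<le> (F t - F y) / (t - y)"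
proof -
  have a: "(F x - F y) / (x - y) \<le> (F x - F t) / (x - t)"
    and b: "(F x - F t) / (x - t) \<le> (F y - F t) / (y - t)"
    using convex_on_slope_le[OF cvx, of x t y] assms by auto
  have "(F y - F x) / (y - x) = (F x - F y) / (x - y)"
    by (metis minus_diff_eq minus_divide_divide)
  moreover have "(F t - F y) / (t - y) = (F y - F t) / (y - t)"
    by (metis minus_diff_eq minus_divide_divide)
  ultimately show ?thesis using a b by linarith
qed

lemma subg_props:
  fixes F :: "real \<Rightarrow> real"
  assumes cvx: "convex_on UNIV F"
  shows subg_le: "y < t \<Longrightarrow> subg F y \<le> (F t - F y) / (t - y)"
    and subg_ge: "x < y \<Longrightarrow> (F y - F x) / (y - x) \<le> subg F y"
proof -
  have bdd: "bdd_below ((\<lambda>t. (F t - F y) / (t - y)) ` {y<..})"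
    unfolding bdd_below_def
    using slope_chain[OF cvx, of "y - 1" y] by auto
  show "y < t \<Longrightarrow> subg F y \<le> (F t - F y) / (t - y)"
    unfolding subg_def by (rule cInf_lower[OF _ bdd]) auto
  show "x < y \<Longrightarrow> (F y - F x) / (y - x) \<le> subg F y"
    unfolding subg_def
    by (rule cInf_greatest) (auto intro: slope_chain[OF cvx] simp: gt_ex)
qed

lemma subg_ineq:
  fixes F :: "real \<Rightarrow> real"
  assumes cvx: "convex_on UNIV F"
  shows "F y + subg F y * (x - y) \<le> F x"
proof (cases x y rule: linorder_cases)
  case less
  then have "(F y - F x) / (y - x) \<le> subg F y" by (rule subg_ge[OF cvx])
  with less have "F y - F x \<le> subg F y * (y - x)" by (simp add: divide_le_eq)
  then show ?thesis by (simp add: algebra_simps)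
next
  case equal then show ?thesis by simp
next
  case greater
  then have "subg F y \<le> (F x - F y) / (x - y)" by (rule subg_le[OF cvx])
  with greater have "subg F y * (x - y) \<le> F x - F y" by (simp add: le_divide_eq)
  then show ?thesis by simp
qed

lemma subg_mono:
  fixes F :: "real \<Rightarrow> real"
  assumes cvx: "convex_on UNIV F" and "x \<le> y"
  shows "subg F x \<le> subg F y"
proof (cases "x = y")
  case False
  with assms have "x < y" by simp
  then show ?thesis using subg_le[OF cvx \<open>x < y\<close>] subg_ge[OF cvx \<open>x < y\<close>] by linarith
qed simp

lemma subg_nonneg:
  fixes F :: "real \<Rightarrow> real"
  assumes cvx: "convex_on UNIV F" and mF: "mono F"
  shows "0 \<le> subg F y"
proof -
  have "0 \<le> (F y - F (y - 1)) / (y - (y - 1))"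
    using mF by (simp add: mono_def)
  also have "\<dots> \<le> subg F y" by (rule subg_ge[OF cvx]) simp
  finally show ?thesis .
qed

lemma tomic_weyl:
  fixes F :: "real \<Rightarrow> real" and x y :: "nat \<Rightarrow> real"
  assumes cvx: "convex_on UNIV F" and mF: "mono F"
    and ys: "\<And>i j. i \<le> j \<Longrightarrow> j < n \<Longrightarrow> y j \<le> y i"
    and ps: "\<And>m. m \<le> n \<Longrightarrow> (\<Sum>i<m. y i) \<le> (\<Sum>i<m. x i)"
  shows "(\<Sum>i<n. F (y i)) \<le> (\<Sum>i<n. F (x i))"
proof -
  have "0 \<le> (\<Sum>i<n. subg F (y i) * (x i - y i))"
  proof (rule abel_nonneg)
    fix i assume "Suc i < n"
    then show "subg F (y (Suc i)) \<le> subg F (y i)"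
      using ys[of i "Suc i"] by (intro subg_mono[OF cvx]) auto
  next
    fix i show "0 \<le> subg F (y i)" by (rule subg_nonneg[OF cvx mF])
  next
    fix m assume "m \<le> n"
    then show "0 \<le> (\<Sum>i<m. x i - y i)" using ps[of m] by (simp add: sum_subtractf)
  qed
  also have "\<dots> \<le> (\<Sum>i<n. F (x i) - F (y i))"
    using subg_ineq[OF cvx] by (intro sum_mono) (simp add: algebra_simps)
  finally show ?thesis by (simp add: sum_subtractf)
qed



lemma pinv_gen:
  fixes \<phi> :: "real \<Rightarrow> real"
  assumes cont: "continuous_on {0..} \<phi>" and nex: "\<exists>x\<ge>0. \<phi> x \<le> v"
    and p0: "\<phi> 0 = 1" and v: "v \<le> 1"
  shows "pseudo_inv \<phi> v = ereal (real_of_ereal (pseudo_inv \<phi> v))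
     \<and> 0 \<le> real_of_ereal (pseudo_inv \<phi> v)
     \<and> \<phi> (real_of_ereal (pseudo_inv \<phi> v)) = v
     \<and> (\<forall>x\<ge>0. \<phi> x \<le> v \<longrightarrow> real_of_ereal (pseudo_inv \<phi> v) \<le> x)"
proof -
  define S where "S = {u. 0 \<le> u \<and> \<phi> u \<le> v}"
  have ne: "S \<noteq> {}" using nex by (auto simp: S_def)
  have cl: "closed S"
  proof -
    have "closed {x \<in> {0..}. \<phi> x \<le> (\<lambda>_. v) x}"
      by (rule continuous_on_closed_Collect_le[OF cont continuous_on_const]) simp
    moreover have "{x \<in> {0..}. \<phi> x \<le> (\<lambda>_. v) x} = S" by (auto simp: S_def)
    ultimately show ?thesis by simp
  qed
  have bdd: "bdd_below S" by (auto simp: S_def bdd_below_def)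
  define p where "p = Inf S"
  have pS: "p \<in> S" unfolding p_def by (rule closed_contains_Inf[OF ne bdd cl])
  have pmin: "\<And>x. x \<in> S \<Longrightarrow> p \<le> x" unfolding p_def by (rule cInf_lower[OF _ bdd])
  have eq: "pseudo_inv \<phi> v = ereal p"
    unfolding pseudo_inv_def S_def[symmetric]
  proof (rule antisym)
    show "Inf (ereal ` S) \<le> ereal p" using pS by (intro Inf_lower) auto
    show "ereal p \<le> Inf (ereal ` S)" using pmin by (intro Inf_greatest) auto
  qed
  have p0': "0 \<le> p" using pS by (simp add: S_def)
  have "\<phi> p = v"
  proof -
    have "\<phi> p \<le> v" using pS by (simp add: S_def)
    moreover have "\<exists>x\<ge>0. x \<le> p \<and> \<phi> x = v"
      by (rule IVT2') (use \<open>\<phi> p \<le> v\<close> v p0 p0' in \<open>auto intro: continuous_on_subset[OF cont]\<close>)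
    then obtain x where "0 \<le> x" "x \<le> p" "\<phi> x = v" by auto
    then have "x \<in> S" by (simp add: S_def)
    then have "p \<le> x" by (rule pmin)
    with \<open>x \<le> p\<close> \<open>\<phi> x = v\<close> show ?thesis by simp
  qed
  then show ?thesis using eq p0' pmin by (auto simp: S_def)
qed

lemma pinv:
  fixes \<phi> :: "real \<Rightarrow> real"
  assumes cont: "continuous_on {0..} \<phi>" and lim: "(\<phi> \<longlongrightarrow> 0) at_top"
    and p0: "\<phi> 0 = 1" and v: "0 < v" "v \<le> 1"
  shows "pseudo_inv \<phi> v = ereal (real_of_ereal (pseudo_inv \<phi> v))
     \<and> 0 \<le> real_of_ereal (pseudo_inv \<phi> v)
     \<and> \<phi> (real_of_ereal (pseudo_inv \<phi> v)) = v
     \<and> (\<forall>x\<ge>0. \<phi> x \<le> v \<longrightarrow> real_of_ereal (pseudo_inv \<phi> v) \<le> x)"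
proof (rule pinv_gen[OF cont _ p0 v(2)])
  have "eventually (\<lambda>x. \<phi> x < v) at_top"
    using lim v by (simp add: order_tendstoD(2))
  then obtain x0 where x0: "\<And>x. x \<ge> x0 \<Longrightarrow> \<phi> x < v"
    by (auto simp: eventually_at_top_linorder)
  show "\<exists>x\<ge>0. \<phi> x \<le> v" using x0[of "max 0 x0"] by (intro exI[of _ "max 0 x0"]) auto
qed

lemma pinv_nonneg: "0 \<le> pseudo_inv \<phi> v"
  unfolding pseudo_inv_def by (rule Inf_greatest) auto

lemma gen_antimono:
  fixes \<phi> :: "real \<Rightarrow> real"
  assumes gen: "archimedean_generator n \<phi>" and n: "n \<ge> 2"
    and xy: "0 < x" "x \<le> y"
  shows "\<phi> y \<le> \<phi> x"
proof (cases "n = 2")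
  case True
  with gen have "antimono_on {0<..} \<phi>"
    by (simp add: archimedean_generator_def n_monotone_pos_def)
  then show ?thesis using xy by (auto simp: monotone_on_def)
next
  case False
  with n have n3: "0 < n - 2" "1 \<le> n - 2" by auto
  from gen have d: "\<And>z. z > 0 \<Longrightarrow> \<phi> differentiable (at z)"
    using n3 unfolding archimedean_generator_def n_monotone_pos_def
    by (metis funpow_0)
  from gen have s: "\<And>z. z > 0 \<Longrightarrow> (-1) ^ 1 * (deriv ^^ 1) \<phi> z \<ge> 0"
    using n3(2) unfolding archimedean_generator_def n_monotone_pos_def
    by blast
  show ?thesis
  proof (rule DERIV_nonpos_imp_nonincreasing[OF xy(2)])
    fix z assume "x \<le> z" "z \<le> y"
    then have "z > 0" using xy by simp
    then show "\<exists>d. DERIV \<phi> z :> d \<and> d \<le> 0"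
      using d[of z] s[of z] DERIV_deriv_iff_real_differentiable[of \<phi> z] by auto
  qed
qed

lemma gen_facts:
  assumes "archimedean_generator n \<phi>"
  shows "continuous_on {0..} \<phi>" "(\<phi> \<longlongrightarrow> 0) at_top" "\<phi> 0 = 1"
    "\<And>x. 0 \<le> x \<Longrightarrow> 0 \<le> \<phi> x" "\<And>x. 0 \<le> x \<Longrightarrow> \<phi> x \<le> 1"
  using assms by (auto simp: archimedean_generator_def)



lemma superadd_sum:
  fixes m :: nat and x :: "nat \<Rightarrow> real" 
  assumes sa: "super_additive h" and h0: "0 \<le> h 0"
    and x: "\<forall>i<m. 0 \<le> x i"
  shows "(\<Sum>i<m. h (x i)) \<le> h (\<Sum>i<m. x i)"
  using x
proof (induction m)
  case 0 then show ?case using h0 by simp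
next
  case (Suc m)
  have "(\<Sum>i<Suc m. h (x i)) = (\<Sum>i<m. h (x i)) + h (x m)" by simp
  also have "\<dots> \<le> h (\<Sum>i<m. x i) + h (x m)" using Suc by (intro add_right_mono) auto
  also have "\<dots> \<le> h ((\<Sum>i<m. x i) + x m)"
  proof -
    have "0 \<le> (\<Sum>i<m. x i)" using Suc.prems by (intro sum_nonneg) auto
    moreover have "0 \<le> x m" using Suc.prems by auto
    ultimately show ?thesis using sa unfolding super_additive_def by blast
  qed
  finally show ?case by simp
qed

lemma gen_eval_ereal[simp]: "gen_eval \<phi> (ereal x) = \<phi> x"
  by (simp add: gen_eval_def)

lemma pinv_sum:
  fixes m :: nat and v :: "nat \<Rightarrow> real"
  assumes g: "archimedean_generator n \<phi>"
    and v: "\<And>i. i < m \<Longrightarrow> 0 < v i \<and> v i \<le> 1"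
  shows "(\<Sum>i<m. pseudo_inv \<phi> (v i)) = ereal (\<Sum>i<m. real_of_ereal (pseudo_inv \<phi> (v i)))"
proof -
  have "(\<Sum>i<m. pseudo_inv \<phi> (v i)) = (\<Sum>i<m. ereal (real_of_ereal (pseudo_inv \<phi> (v i))))"
    using pinv[OF gen_facts(1-3)[OF g]] v by (intro sum.cong) auto
  then show ?thesis by (simp add: sum_ereal)
qed

lemma copula_order:
  fixes m :: nat and v :: "nat \<Rightarrow> real"
  assumes g1: "archimedean_generator n \<phi>1" and g2: "archimedean_generator n \<phi>2"
    and n: "n \<ge> 2" and sa: "super_additive (\<lambda>x. pseudo_inv \<phi>2 (\<phi>1 x))"
    and v: "\<And>i. i < m \<Longrightarrow> 0 < v i \<and> v i \<le> 1"
  shows "gen_eval \<phi>1 (\<Sum>i<m. pseudo_inv \<phi>1 (v i)) \<le> gen_eval \<phi>2 (\<Sum>i<m. pseudo_inv \<phi>2 (v i))"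
proof -
  define P1 where "P1 i = real_of_ereal (pseudo_inv \<phi>1 (v i))" for i
  define P2 where "P2 i = real_of_ereal (pseudo_inv \<phi>2 (v i))" for i
  have e1: "\<And>i. i < m \<Longrightarrow> 0 \<le> P1 i \<and> \<phi>1 (P1 i) = v i"
    using pinv[OF gen_facts(1-3)[OF g1]] v unfolding P1_def by blast
  have e2: "\<And>i. i < m \<Longrightarrow> 0 \<le> P2 i"
    using pinv[OF gen_facts(1-3)[OF g2]] v unfolding P2_def by blast
  define S where "S = (\<Sum>i<m. P1 i)"
  define T where "T = (\<Sum>i<m. P2 i)"
  have L: "gen_eval \<phi>1 (\<Sum>i<m. pseudo_inv \<phi>1 (v i)) = \<phi>1 S"
    using pinv_sum[of n \<phi>1 m v, OF g1 v] by (simp add: S_def P1_def)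
  have R: "gen_eval \<phi>2 (\<Sum>i<m. pseudo_inv \<phi>2 (v i)) = \<phi>2 T"
    using pinv_sum[of n \<phi>2 m v, OF g2 v] by (simp add: T_def P2_def)
  have S0: "0 \<le> S" unfolding S_def using e1 by (intro sum_nonneg) auto
  have T0: "0 \<le> T" unfolding T_def using e2 by (intro sum_nonneg) auto
  define w where "w = \<phi>1 S"
  have w01: "0 \<le> w" "w \<le> 1" using gen_facts(4,5)[OF g1 S0] by (auto simp: w_def)
  show ?thesis
  proof (cases "w = 0")
    case True
    then show ?thesis using L R gen_facts(4)[OF g2 T0] by (simp add: w_def)
  next
    case False
    with w01 have wpos: "0 < w" by simp
    obtain q where q: "pseudo_inv \<phi>2 w = ereal q" "\<phi>2 q = w" "0 \<le> q"
      using pinv[OF gen_facts(1-3)[OF g2] wpos w01(2)] by blast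
    have "(\<Sum>i<m. pseudo_inv \<phi>2 (\<phi>1 (P1 i))) \<le> pseudo_inv \<phi>2 (\<phi>1 (\<Sum>i<m. P1 i))"
      by (rule superadd_sum[OF sa, of m P1]) (use e1 pinv_nonneg in auto)
    moreover have "(\<Sum>i<m. pseudo_inv \<phi>2 (\<phi>1 (P1 i))) = (\<Sum>i<m. pseudo_inv \<phi>2 (v i))"
      using e1 by (intro sum.cong) auto
    ultimately have "ereal T \<le> ereal q"
      using pinv_sum[of n \<phi>2 m v, OF g2 v] q(1) by (simp add: T_def P2_def S_def w_def)
    then have Tq: "T \<le> q" by simp
    have "w \<le> \<phi>2 T"
    proof (cases "T = 0")
      case True then show ?thesis using gen_facts(3)[OF g2] w01 by simp
    next
      case False
      then show ?thesis using gen_antimono[OF g2 n, of T q] T0 Tq q(2) by simp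
    qed
    then show ?thesis using L R by (simp add: w_def)
  qed
qed



lemma powr_01:
  fixes u a :: real
  assumes "0 < u" "u < 1" "0 < a"
  shows "0 < u powr a" "u powr a < 1"
proof -
  show "0 < u powr a" using assms by simp
  have "u powr a < 1 powr a" using assms by (intro powr_less_mono2) auto
  then show "u powr a < 1" by simp
qed

lemma logconv_F:
  fixes \<phi> :: "real \<Rightarrow> real"
  assumes g: "archimedean_generator n \<phi>" and lc: "log_convex \<phi>"
    and u: "0 < u" "u < 1"
  shows "convex_on UNIV (\<lambda>s. real_of_ereal (pseudo_inv \<phi> (u powr exp s)))"
    and "mono (\<lambda>s. real_of_ereal (pseudo_inv \<phi> (u powr exp s)))"
proof -
  define z where "z s = real_of_ereal (pseudo_inv \<phi> (u powr exp s))" for s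
  have vs: "0 < u powr exp s" "u powr exp s \<le> 1" for s
    using powr_01[OF u, of "exp s"] by auto
  have zp: "0 \<le> z s" "\<phi> (z s) = u powr exp s"
    "\<And>x. 0 \<le> x \<Longrightarrow> \<phi> x \<le> u powr exp s \<Longrightarrow> z s \<le> x" for s
    using pinv[OF gen_facts(1-3)[OF g] vs[of s]] unfolding z_def by blast+
  have pos: "\<And>x. 0 \<le> x \<Longrightarrow> 0 < \<phi> x" and cv: "convex_on {0..} (\<lambda>x. ln (\<phi> x))"
    using lc by (auto simp: log_convex_def)
  have lnu: "ln u < 0" using u by simp
  show "convex_on UNIV (\<lambda>s. real_of_ereal (pseudo_inv \<phi> (u powr exp s)))"
    unfolding z_def[symmetric]
  proof (rule convex_onI)
    fix t x y :: real assume t: "0 < t" "t < 1"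
    define p where "p = (1 - t) * z x + t * z y"
    have p0: "0 \<le> p" unfolding p_def using zp(1)[of x] zp(1)[of y] t by simp
    have "ln (\<phi> p) \<le> (1 - t) * ln (\<phi> (z x)) + t * ln (\<phi> (z y))"
      using convex_onD[OF cv, of t "z x" "z y"] t zp(1)[of x] zp(1)[of y] by (simp add: p_def)
    also have "\<dots> = ln u * ((1 - t) * exp x + t * exp y)"
      using zp(2)[of x] zp(2)[of y] u by (simp add: ln_powr algebra_simps)
    also have "\<dots> \<le> ln u * exp ((1 - t) * x + t * y)"
    proof (rule mult_left_mono_neg)
      show "exp ((1 - t) * x + t * y) \<le> (1 - t) * exp x + t * exp y"
        using convex_onD[OF exp_convex, of t x y] t by simp
    qed (use lnu in simp)
    also have "\<dots> = ln (u powr exp ((1 - t) * x + t * y))"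
      using u by (simp add: ln_powr)
    finally have "ln (\<phi> p) \<le> ln (u powr exp ((1 - t) * x + t * y))" .
    then have "\<phi> p \<le> u powr exp ((1 - t) * x + t * y)"
      using pos[OF p0] vs ln_le_cancel_iff by blast
    then have "z ((1 - t) * x + t * y) \<le> p" using zp(3) p0 by blast
    then show "z ((1 - t) *\<^sub>R x + t *\<^sub>R y) \<le> (1 - t) * z x + t * z y"
      by (simp add: p_def)
  qed simp
  show "mono (\<lambda>s. real_of_ereal (pseudo_inv \<phi> (u powr exp s)))"
    unfolding z_def[symmetric]
  proof (rule monoI)
    fix x y :: real assume "x \<le> y"
    then have "u powr exp y \<le> u powr exp x" using u by (simp add: powr_mono')
    then have "\<phi> (z y) \<le> u powr exp x" using zp(2)[of y] by simp
    then show "z x \<le> z y" using zp(3)[of "z y" x] zp(1)[of y] by simp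
  qed
qed



lemma dec_len[simp]: "length (dec_arr n a) = n"
  by (simp add: dec_arr_def)

lemma dec_sorted:
  assumes "i \<le> j" "j < n"
  shows "dec_arr n a ! j \<le> dec_arr n a ! i"
proof -
  define s where "s = sort (map a [0..<n])"
  have ls: "length s = n" by (simp add: s_def)
  have "sorted s" by (simp add: s_def)
  then have "s ! (n - Suc j) \<le> s ! (n - Suc i)"
    using assms ls by (intro sorted_nth_mono) auto
  then show ?thesis using assms ls by (simp add: dec_arr_def s_def[symmetric] rev_nth)
qed

lemma dec_sum:
  fixes h :: "real \<Rightarrow> real"
  shows "(\<Sum>i<n. h (a i)) = (\<Sum>i<n. h (dec_arr n a ! i))"
proof -
  have "mset (dec_arr n a) = mset (map a [0..<n])" by (simp add: dec_arr_def)
  then have "sum_list (map h (dec_arr n a)) = sum_list (map h (map a [0..<n]))"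
    by (metis mset_map sum_mset_sum_list)
  moreover have "sum_list (map h (map a [0..<n])) = (\<Sum>i<n. h (a i))"
    by (simp add: interv_sum_list_conv_sum_set_nat atLeast0LessThan)
  moreover have "sum_list (map h (dec_arr n a)) = (\<Sum>i<n. h (dec_arr n a ! i))"
    by (simp add: sum_list_sum_nth atLeast0LessThan)
  ultimately show ?thesis by simp
qed

lemma dec_pos:
  assumes "\<forall>i<n. a i > 0" "i < n"
  shows "dec_arr n a ! i > 0"
proof -
  have "dec_arr n a ! i \<in> set (dec_arr n a)" using assms by simp
  also have "set (dec_arr n a) = a ` {..<n}" by (auto simp: dec_arr_def)
  finally show ?thesis using assms by auto
qed

lemma dec_prod:
  assumes "j \<le> n"
  shows "prod_list (take j (dec_arr n a)) = (\<Prod>i<j. dec_arr n a ! i)"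
  using assms by (simp add: prod.list_conv_set_nth atLeast0LessThan min_def)

lemma majorization:
  fixes F :: "real \<Rightarrow> real" and \<alpha> \<alpha>s :: "nat \<Rightarrow> real" and n :: nat
  assumes cvx: "convex_on UNIV F" and mF: "mono F"
    and a: "\<forall>i<n. \<alpha> i > 0" and as: "\<forall>i<n. \<alpha>s i > 0"
    and pc: "\<forall>j\<in>{1..n}. prod_list (take j (dec_arr n \<alpha>s)) \<le> prod_list (take j (dec_arr n \<alpha>))"
  shows "(\<Sum>i<n. F (ln (\<alpha>s i))) \<le> (\<Sum>i<n. F (ln (\<alpha> i)))"
proof -
  define x where "x i = ln (dec_arr n \<alpha> ! i)" for i
  define y where "y i = ln (dec_arr n \<alpha>s ! i)" for i
  have "(\<Sum>i<n. F (y i)) \<le> (\<Sum>i<n. F (x i))"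
  proof (rule tomic_weyl[OF cvx mF])
    fix i j assume "i \<le> j" "j < n"
    then show "y j \<le> y i"
      unfolding y_def using dec_sorted[of i j n \<alpha>s] dec_pos[OF as, of i] dec_pos[OF as, of j]
      by simp
  next
    fix m assume m: "m \<le> n"
    show "(\<Sum>i<m. y i) \<le> (\<Sum>i<m. x i)"
    proof (cases "m = 0")
      case False
      have "(\<Prod>i<m. dec_arr n \<alpha>s ! i) \<le> (\<Prod>i<m. dec_arr n \<alpha> ! i)"
      proof -
        have "m \<in> {1..n}" using m False by simp
        then have "prod_list (take m (dec_arr n \<alpha>s)) \<le> prod_list (take m (dec_arr n \<alpha>))"
          using pc by blast
        then show ?thesis by (simp only: dec_prod[OF m])
      qed
      moreover have p1: "0 < (\<Prod>i<m. dec_arr n \<alpha>s ! i)"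
        using m dec_pos[OF as] by (intro prod_pos) auto
      moreover have p2: "0 < (\<Prod>i<m. dec_arr n \<alpha> ! i)"
        using m dec_pos[OF a] by (intro prod_pos) auto
      ultimately have "ln (\<Prod>i<m. dec_arr n \<alpha>s ! i) \<le> ln (\<Prod>i<m. dec_arr n \<alpha> ! i)"
        by simp
      moreover have "ln (\<Prod>i<m. dec_arr n \<alpha>s ! i) = (\<Sum>i<m. y i)"
      proof -
        have nz: "\<And>i. i \<in> {..<m} \<Longrightarrow> dec_arr n \<alpha>s ! i \<noteq> 0"
          using m dec_pos[OF as] by (metis lessThan_iff less_le_trans order_less_irrefl)
        show ?thesis unfolding y_def by (rule ln_prod[OF finite_lessThan nz])
      qed
      moreover have "ln (\<Prod>i<m. dec_arr n \<alpha> ! i) = (\<Sum>i<m. x i)"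
      proof -
        have nz: "\<And>i. i \<in> {..<m} \<Longrightarrow> dec_arr n \<alpha> ! i \<noteq> 0"
          using m dec_pos[OF a] by (metis lessThan_iff less_le_trans order_less_irrefl)
        show ?thesis unfolding x_def by (rule ln_prod[OF finite_lessThan nz])
      qed
      ultimately show ?thesis by simp
    qed simp
  qed
  then show ?thesis
    using dec_sum[where h="\<lambda>v. F (ln v)" and n=n and a=\<alpha>] dec_sum[where h="\<lambda>v. F (ln v)" and n=n and a=\<alpha>s]
    by (simp add: x_def y_def)
qed



lemma logconv_step:
  fixes \<phi> :: "real \<Rightarrow> real" and \<alpha> \<alpha>s :: "nat \<Rightarrow> real" and n :: nat
  assumes g: "archimedean_generator n \<phi>" and n: "n \<ge> 2" and lc: "log_convex \<phi>"
    and u: "0 < u" "u < 1"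
    and a: "\<forall>i<n. \<alpha> i > 0" and as: "\<forall>i<n. \<alpha>s i > 0"
    and pc: "\<forall>j\<in>{1..n}. prod_list (take j (dec_arr n \<alpha>s)) \<le> prod_list (take j (dec_arr n \<alpha>))"
  shows "gen_eval \<phi> (\<Sum>i<n. pseudo_inv \<phi> (u powr \<alpha> i))
       \<le> gen_eval \<phi> (\<Sum>i<n. pseudo_inv \<phi> (u powr \<alpha>s i))"
proof -
  define F where "F s = real_of_ereal (pseudo_inv \<phi> (u powr exp s))" for s
  have cvx: "convex_on UNIV F" and mF: "mono F"
    using logconv_F[OF g lc u] unfolding F_def by auto
  have "(\<Sum>i<n. F (ln (\<alpha>s i))) \<le> (\<Sum>i<n. F (ln (\<alpha> i)))"
    by (rule majorization[OF cvx mF a as pc])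
  moreover have "(\<Sum>i<n. F (ln (\<alpha>s i))) = (\<Sum>i<n. real_of_ereal (pseudo_inv \<phi> (u powr \<alpha>s i)))"
    using as by (intro sum.cong) (auto simp: F_def)
  moreover have "(\<Sum>i<n. F (ln (\<alpha> i))) = (\<Sum>i<n. real_of_ereal (pseudo_inv \<phi> (u powr \<alpha> i)))"
    using a by (intro sum.cong) (auto simp: F_def)
  ultimately have le: "(\<Sum>i<n. real_of_ereal (pseudo_inv \<phi> (u powr \<alpha>s i)))
      \<le> (\<Sum>i<n. real_of_ereal (pseudo_inv \<phi> (u powr \<alpha> i)))" by simp
  have v1: "\<And>i. i < n \<Longrightarrow> 0 < u powr \<alpha> i \<and> u powr \<alpha> i \<le> 1"
    using powr_01[OF u] a by (auto intro: less_imp_le)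
  have v2: "\<And>i. i < n \<Longrightarrow> 0 < u powr \<alpha>s i \<and> u powr \<alpha>s i \<le> 1"
    using powr_01[OF u] as by (auto intro: less_imp_le)
  define S where "S = (\<Sum>i<n. real_of_ereal (pseudo_inv \<phi> (u powr \<alpha> i)))"
  define T where "T = (\<Sum>i<n. real_of_ereal (pseudo_inv \<phi> (u powr \<alpha>s i)))"
  have T0: "0 \<le> T" unfolding T_def
    using pinv[OF gen_facts(1-3)[OF g]] v2 by (intro sum_nonneg) blast
  have "\<phi> S \<le> \<phi> T"
  proof (cases "T = 0")
    case True
    then have "0 \<le> S" using le by (simp add: S_def T_def)
    then show ?thesis using True gen_facts(3,5)[OF g] by simp
  next
    case False
    then show ?thesis using gen_antimono[OF g n, of T S] T0 le by (simp add: S_def T_def)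
  qed
  then show ?thesis
    using pinv_sum[of n \<phi> n "\<lambda>i. u powr \<alpha> i", OF g v1] pinv_sum[of n \<phi> n "\<lambda>i. u powr \<alpha>s i", OF g v2]
    by (simp add: S_def T_def)
qed

lemma gen_eval_nonneg:
  assumes g: "archimedean_generator n \<phi>" and z: "0 \<le> z"
  shows "0 \<le> gen_eval \<phi> z"
  using gen_facts(4)[OF g] z by (auto simp: gen_eval_def real_of_ereal_pos)

lemma zero_case:
  fixes \<phi> :: "real \<Rightarrow> real" and n :: nat
  assumes g: "archimedean_generator n \<phi>" and n: "n \<ge> 2"
  shows "gen_eval \<phi> (\<Sum>i<n. pseudo_inv \<phi> 0) = 0"
proof (cases "\<exists>x\<ge>0. \<phi> x \<le> 0")
  case True
  obtain r where r: "pseudo_inv \<phi> 0 = ereal r" "0 \<le> r" "\<phi> r = 0"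
    using pinv_gen[OF gen_facts(1)[OF g] True gen_facts(3)[OF g]] by auto
  have rpos: "0 < r" using r gen_facts(3)[OF g] by (cases "r = 0") auto
  have "(\<Sum>i<n. pseudo_inv \<phi> 0) = ereal (real n * r)" using r(1) by (simp add: sum_ereal)
  moreover have "\<phi> (real n * r) \<le> \<phi> r"
    using n rpos by (intro gen_antimono[OF g n]) auto
  moreover have "0 \<le> \<phi> (real n * r)" using rpos by (intro gen_facts(4)[OF g]) simp
  ultimately show ?thesis using r by simp
next
  case False
  then have E: "{u. 0 \<le> u \<and> \<phi> u \<le> 0} = {}" by auto
  have "pseudo_inv \<phi> 0 = \<infinity>" unfolding pseudo_inv_def E by (simp add: top_ereal_def)
  moreover have "0 < n" using n by simp
  ultimately have "(\<Sum>i<n. pseudo_inv \<phi> 0) = \<infinity>" by (auto simp: sum_Pinfty)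
  then show ?thesis by (simp add: gen_eval_def)
qed

lemma key_ineq:
  fixes \<phi>1 \<phi>2 :: "real \<Rightarrow> real" and \<alpha> \<alpha>s :: "nat \<Rightarrow> real" and n :: nat
  assumes n: "n \<ge> 2"
    and a: "\<forall>i<n. \<alpha> i > 0" and as: "\<forall>i<n. \<alpha>s i > 0"
    and g1: "archimedean_generator n \<phi>1" and g2: "archimedean_generator n \<phi>2"
    and lc: "log_convex \<phi>1 \<or> log_convex \<phi>2"
    and sa: "super_additive (\<lambda>x. pseudo_inv \<phi>2 (\<phi>1 x))"
    and pc: "\<forall>j\<in>{1..n}. prod_list (take j (dec_arr n \<alpha>s)) \<le> prod_list (take j (dec_arr n \<alpha>))"
    and u: "0 \<le> u" "u \<le> 1"
  shows "gen_eval \<phi>1 (\<Sum>i<n. pseudo_inv \<phi>1 (u powr \<alpha> i))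
       \<le> gen_eval \<phi>2 (\<Sum>i<n. pseudo_inv \<phi>2 (u powr \<alpha>s i))"
proof -
  have R0: "0 \<le> gen_eval \<phi>2 (\<Sum>i<n. pseudo_inv \<phi>2 (u powr \<alpha>s i))"
    by (intro gen_eval_nonneg[OF g2] sum_nonneg pinv_nonneg)
  consider "u = 0" | "u = 1" | "0 < u" "u < 1" using u by linarith
  then show ?thesis
  proof cases
    case 1
    then show ?thesis using zero_case[OF g1 n] R0 by simp
  next
    case 2
    have "gen_eval \<phi>1 (\<Sum>i<n. pseudo_inv \<phi>1 ((\<lambda>i. 1::real) i))
        \<le> gen_eval \<phi>2 (\<Sum>i<n. pseudo_inv \<phi>2 ((\<lambda>i. 1::real) i))"
      by (rule copula_order[OF g1 g2 n sa]) simp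
    then show ?thesis using 2 by simp
  next
    case 3
    have v1: "\<And>i. i < n \<Longrightarrow> 0 < u powr \<alpha> i \<and> u powr \<alpha> i \<le> 1"
      using powr_01[OF 3] a by (auto intro: less_imp_le)
    have v2: "\<And>i. i < n \<Longrightarrow> 0 < u powr \<alpha>s i \<and> u powr \<alpha>s i \<le> 1"
      using powr_01[OF 3] as by (auto intro: less_imp_le)
    from lc show ?thesis
    proof
      assume l: "log_convex \<phi>1"
      have "gen_eval \<phi>1 (\<Sum>i<n. pseudo_inv \<phi>1 (u powr \<alpha> i))
          \<le> gen_eval \<phi>1 (\<Sum>i<n. pseudo_inv \<phi>1 (u powr \<alpha>s i))"
        by (rule logconv_step[OF g1 n l 3 a as pc])
      also have "\<dots> \<le> gen_eval \<phi>2 (\<Sum>i<n. pseudo_inv \<phi>2 (u powr \<alpha>s i))"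
        by (rule copula_order[OF g1 g2 n sa v2])
      finally show ?thesis .
    next
      assume l: "log_convex \<phi>2"
      have "gen_eval \<phi>1 (\<Sum>i<n. pseudo_inv \<phi>1 (u powr \<alpha> i))
          \<le> gen_eval \<phi>2 (\<Sum>i<n. pseudo_inv \<phi>2 (u powr \<alpha> i))"
        by (rule copula_order[OF g1 g2 n sa v1])
      also have "\<dots> \<le> gen_eval \<phi>2 (\<Sum>i<n. pseudo_inv \<phi>2 (u powr \<alpha>s i))"
        by (rule logconv_step[OF g2 n l 3 a as pc])
      finally show ?thesis .
    qed
  qed
qed

lemma G_bounds:
  assumes "abs_cont_cdf_nonneg G"
  shows "0 \<le> G t" "G t \<le> 1"
proof -
  obtain g where g: "\<And>x. 0 \<le> g x" "(g has_integral 1) UNIV" "\<And>x. (g has_integral G x) {..x}"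
    using assms by (auto simp: abs_cont_cdf_nonneg_def)
  show "0 \<le> G t" using has_integral_nonneg[OF g(3)[of t]] g(1) by auto
  show "G t \<le> 1" using has_integral_subset_le[OF _ g(3)[of t] g(2)] g(1) by auto
qed

lemma max_prob:
  fixes M :: "'a measure" and X :: "nat \<Rightarrow> 'a \<Rightarrow> real"
  assumes P: "prob_space M" and n: "n \<ge> 2" and X: "\<forall>i<n. X i \<in> borel_measurable M"
  shows "measure M {\<omega> \<in> space M. Max ((\<lambda>i. X i \<omega>) ` {..<n}) > t}
       = 1 - measure M {\<omega> \<in> space M. \<forall>i<n. X i \<omega> \<le> t}"
proof -
  define A where "A = {\<omega> \<in> space M. \<forall>i<n. X i \<omega> \<le> t}"
  have "A = {\<omega> \<in> space M. \<forall>i\<in>{..<n}. X i \<omega> \<le> t}" by (auto simp: A_def)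
  also have "\<dots> \<in> sets M"
  proof (rule sets.sets_Collect_finite_All')
    fix i assume "i \<in> {..<n}"
    then show "{\<omega> \<in> space M. X i \<omega> \<le> t} \<in> sets M"
      using X borel_measurable_iff_le by auto
  next
    show "finite {..<n}" by simp
  next
    have "0 \<in> {..<n}" using n by simp
    then show "{..<n} \<noteq> {}" by blast
  qed
  finally have Am: "A \<in> sets M" .
  have ne: "{..<n} \<noteq> {}" using n by (metis lessThan_empty_iff not_numeral_le_zero)
  have mx: "(t < Max ((\<lambda>i. X i \<omega>) ` {..<n})) = (\<exists>i<n. t < X i \<omega>)" for \<omega>
    using ne by (subst Max_gr_iff) auto
  have "{\<omega> \<in> space M. Max ((\<lambda>i. X i \<omega>) ` {..<n}) > t} = space M - A"
    by (auto simp: A_def mx not_le)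
  then show ?thesis using prob_space.prob_compl[OF P Am] by (simp add: A_def)
qed


theorem mainTheorem14:
  fixes n :: nat and G :: "real \<Rightarrow> real"
    and \<alpha> \<alpha>s :: "nat \<Rightarrow> real"
    and \<phi>1 \<phi>2 :: "real \<Rightarrow> real"
    and M :: "'a measure" and N :: "'b measure"
    and X :: "nat \<Rightarrow> 'a \<Rightarrow> real" and Xs :: "nat \<Rightarrow> 'b \<Rightarrow> real"
  assumes "n \<ge> 2"
    and "abs_cont_cdf_nonneg G"
    and "\<forall>i<n. \<alpha> i > 0" and "\<forall>i<n. \<alpha>s i > 0"
    and "archimedean_generator n \<phi>1" and "archimedean_generator n \<phi>2"
    and "prob_space M" and "prob_space N"
    and "\<forall>i<n. X i \<in> borel_measurable M" and "\<forall>i<n. Xs i \<in> borel_measurable N"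
    and "\<forall>x::nat \<Rightarrow> real. measure M {\<omega> \<in> space M. \<forall>i<n. X i \<omega> \<le> x i}
           = gen_eval \<phi>1 (\<Sum>i<n. pseudo_inv \<phi>1 (G (x i) powr \<alpha> i))"
    and "\<forall>x::nat \<Rightarrow> real. measure N {\<omega> \<in> space N. \<forall>i<n. Xs i \<omega> \<le> x i}
           = gen_eval \<phi>2 (\<Sum>i<n. pseudo_inv \<phi>2 (G (x i) powr \<alpha>s i))"
    and "log_convex \<phi>1 \<or> log_convex \<phi>2"
    and "super_additive (\<lambda>x. pseudo_inv \<phi>2 (\<phi>1 x))"
    and "\<forall>j\<in>{1..n}. prod_list (take j (dec_arr n \<alpha>s)) \<le> prod_list (take j (dec_arr n \<alpha>))"
  shows "\<forall>t. measure N {\<omega> \<in> space N. Max ((\<lambda>i. Xs i \<omega>) ` {..<n}) > t}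
           \<le> measure M {\<omega> \<in> space M. Max ((\<lambda>i. X i \<omega>) ` {..<n}) > t}"
  proof
  fix t :: real
  have u: "0 \<le> G t" "G t \<le> 1" using G_bounds[OF assms(2)] by auto
  have eN: "measure N {\<omega> \<in> space N. Max ((\<lambda>i. Xs i \<omega>) ` {..<n}) > t}
      = 1 - gen_eval \<phi>2 (\<Sum>i<n. pseudo_inv \<phi>2 (G t powr \<alpha>s i))"
    using max_prob[OF assms(8) assms(1) assms(10), of t] assms(12)[rule_format, of "\<lambda>_. t"] by simp
  have eM: "measure M {\<omega> \<in> space M. Max ((\<lambda>i. X i \<omega>) ` {..<n}) > t}
      = 1 - gen_eval \<phi>1 (\<Sum>i<n. pseudo_inv \<phi>1 (G t powr \<alpha> i))"
    using max_prob[OF assms(7) assms(1) assms(9), of t] assms(11)[rule_format, of "\<lambda>_. t"] by simp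
  have "gen_eval \<phi>1 (\<Sum>i<n. pseudo_inv \<phi>1 (G t powr \<alpha> i))
       \<le> gen_eval \<phi>2 (\<Sum>i<n. pseudo_inv \<phi>2 (G t powr \<alpha>s i))"
    by (rule key_ineq[OF assms(1) assms(3) assms(4) assms(5) assms(6) assms(13) assms(14) assms(15) u])
  then show "measure N {\<omega> \<in> space N. Max ((\<lambda>i. Xs i \<omega>) ` {..<n}) > t}
           \<le> measure M {\<omega> \<in> space M. Max ((\<lambda>i. X i \<omega>) ` {..<n}) > t}"
    using eN eM by simp
qed

end
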